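(* Let $X$ be an uncountable set and let $\ell_\infty(X)$ be the space of all bounded functions $f:X\to\mathbb{R}$. Then there exists no reproducing kernel Hilbert space $H$ of functions on $X$ such that $\ell_\infty(X)\subset H$.
   Context: A reproducing kernel Hilbert space (RKHS) on a set $X$ is a Hilbert space $H$ consisting of real-valued functions $f:X\to\mathbb{R}$ (with the pointwise vector space operations) such that for every $x\in X$ the point evaluation $f\mapsto f(x)$ is a continuous linear functional on $H$; equivalently, $H$ has a reproducing kernel $k:X\times X\to\mathbb{R}$ with $k(\cdot,x)\in H$ and $f(x)=\langle f,k(\cdot,x)\rangle_H$ for all $f\in H$, $x\in X$. The inclusion $\ell_\infty(X)\subset H$ is meant as sets of functions on $X$. *)

theory Defs
  imports "HOL-Analysis.Analysis"
begin

text \<open>A Hilbert space of real-valued functions on the type 'x is represented by an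
abstract real Hilbert space (a type of class real_inner and complete_space) together
with an injective linear map into the functions 'x => real, whose image is the
underlying set of functions H; its vector operations are thus the pointwise ones.\<close>

definition is_rkhs :: "('h::{real_inner,complete_space} \<Rightarrow> ('x \<Rightarrow> real)) \<Rightarrow> bool" where
  "is_rkhs \<iota> \<longleftrightarrow>
     (\<forall>a b x. \<iota> (a + b) x = \<iota> a x + \<iota> b x) \<and>
     (\<forall>c a x. \<iota> (c *\<^sub>R a) x = c * \<iota> a x) \<and> inj \<iota> \<and> (\<forall>x. continuous_on UNIV (\<lambda>h. \<iota> h x))"

definition ell_infty :: "('x \<Rightarrow> real) set" where
  "ell_infty = {f. bounded (range f)}"

end

theory Submission
  imports Defs
begin

lemma greedy_signs:
  fixes v :: "nat \<Rightarrow> 'a::real_inner"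
  shows "\<exists>e. (\<forall>i. e i = 1 \<or> e i = -1) \<and>
             (norm (\<Sum>i<n. e i *\<^sub>R v i))\<^sup>2 \<le> (\<Sum>i<n. (norm (v i))\<^sup>2)"
proof (induction n)
  case 0
  show ?case by (rule exI[of _ "\<lambda>_. 1"]) simp
next
  case (Suc n)
  then obtain e where e1: "\<forall>i. e i = 1 \<or> e i = -1"
    and e2: "(norm (\<Sum>i<n. e i *\<^sub>R v i))\<^sup>2 \<le> (\<Sum>i<n. (norm (v i))\<^sup>2)" by blast
  define s where "s = (\<Sum>i<n. e i *\<^sub>R v i)"
  define \<sigma> :: real where "\<sigma> = (if inner s (v n) \<le> 0 then 1 else -1)"
  define e' where "e' = e(n := \<sigma>)"
  have s': "(\<Sum>i<n. e' i *\<^sub>R v i) = s"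
    unfolding s_def e'_def by (rule sum.cong) auto
  have sum': "(\<Sum>i<Suc n. e' i *\<^sub>R v i) = s + \<sigma> *\<^sub>R v n"
    using s' by (simp add: e'_def)
  have sg: "\<sigma> * inner s (v n) \<le> 0" "\<sigma> * \<sigma> = 1"
    by (auto simp: \<sigma>_def)
  have "(norm (s + \<sigma> *\<^sub>R v n))\<^sup>2 = (norm s)\<^sup>2 + 2 * (\<sigma> * inner s (v n)) + (\<sigma> * \<sigma>) * (norm (v n))\<^sup>2"
    by (simp add: power2_norm_eq_inner inner_add_left inner_add_right inner_commute algebra_simps)
  also have "\<dots> \<le> (norm s)\<^sup>2 + (norm (v n))\<^sup>2" using sg by simp
  finally have "(norm (\<Sum>i<Suc n. e' i *\<^sub>R v i))\<^sup>2 \<le> (\<Sum>i<Suc n. (norm (v i))\<^sup>2)"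
    using e2 sum' s_def by simp
  moreover have "\<forall>i. e' i = 1 \<or> e' i = -1" using e1 by (auto simp: e'_def \<sigma>_def)
  ultimately show ?case by blast
qed

lemma riesz_rep:
  fixes \<phi> :: "'h::{real_inner,complete_space} \<Rightarrow> real"
  assumes add: "\<And>a b. \<phi> (a + b) = \<phi> a + \<phi> b"
    and sc: "\<And>c a. \<phi> (c *\<^sub>R a) = c * \<phi> a"
    and cont: "continuous_on UNIV \<phi>"
  shows "\<exists>k. \<forall>h. \<phi> h = inner h k"
proof (cases "\<forall>h. \<phi> h = 0")
  case True
  then show ?thesis by (intro exI[of _ 0]) simp
next
  case False
  then obtain h1 where h1: "\<phi> h1 \<noteq> 0" by blast
  define h0 where "h0 = (1 / \<phi> h1) *\<^sub>R h1"
  have h0: "\<phi> h0 = 1" using h1 by (simp add: h0_def sc)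
  have z0: "\<phi> 0 = 0" using sc[of 0 0] by simp
  have mi: "\<phi> (a - b) = \<phi> a - \<phi> b" for a b
    using add[of "a - b" b] by simp
  define N where "N = {n. \<phi> n = 0}"
  have clN: "closed N" unfolding N_def
    by (rule closed_Collect_eq[OF cont]) simp
  have N0: "0 \<in> N" using z0 by (simp add: N_def)
  have Nadd: "a \<in> N \<Longrightarrow> b \<in> N \<Longrightarrow> a + b \<in> N" for a b by (simp add: N_def add)
  have Nsc: "a \<in> N \<Longrightarrow> c *\<^sub>R a \<in> N" for a c by (simp add: N_def sc)
  define D where "D = Inf ((\<lambda>n. (norm (h0 - n))\<^sup>2) ` N)"
  have bdd: "bdd_below ((\<lambda>n. (norm (h0 - n))\<^sup>2) ` N)"
    by (rule bdd_belowI[of _ 0]) auto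
  have Dle: "D \<le> (norm (h0 - n))\<^sup>2" if "n \<in> N" for n
    unfolding D_def using bdd that by (auto intro: cInf_lower)
  have "\<exists>n\<in>N. (norm (h0 - n))\<^sup>2 < D + inverse (real (Suc j))" for j
  proof -
    have "Inf ((\<lambda>n. (norm (h0 - n))\<^sup>2) ` N) < D + inverse (real (Suc j))"
      unfolding D_def by simp
    then show ?thesis using N0 by (subst (asm) cInf_less_iff) (auto simp: bdd)
  qed
  then obtain p where pN: "\<And>j. p j \<in> N"
    and pD: "\<And>j. (norm (h0 - p j))\<^sup>2 < D + inverse (real (Suc j))" by metis
  have para: "(norm (p j - p k))\<^sup>2 \<le> 2 * inverse (real (Suc j)) + 2 * inverse (real (Suc k))" for j k
  proof -
    define a where "a = h0 - p j"
    define b where "b = h0 - p k"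
    have id: "(norm (b - a))\<^sup>2 + (norm (a + b))\<^sup>2 = 2 * (norm a)\<^sup>2 + 2 * (norm b)\<^sup>2"
      by (simp add: power2_norm_eq_inner inner_add_left inner_add_right inner_diff_left inner_diff_right inner_commute algebra_simps)
    have mid: "(1/2) *\<^sub>R (p j + p k) \<in> N" using pN Nadd Nsc by blast
    have hh: "h0 = (1/2) *\<^sub>R h0 + (1/2) *\<^sub>R h0"
      by (metis scaleR_add_left field_sum_of_halves scaleR_one)
    have "h0 - (1/2) *\<^sub>R (p j + p k) = (1/2) *\<^sub>R (a + b)"
      unfolding a_def b_def by (subst hh) (simp add: algebra_simps)
    then have "D \<le> (norm ((1/2) *\<^sub>R (a + b)))\<^sup>2" using Dle[OF mid] by simp
    also have "\<dots> = (norm (a + b))\<^sup>2 / 4" by (simp add: power2_eq_square)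
    finally have "4 * D \<le> (norm (a + b))\<^sup>2" by simp
    moreover have "b - a = p j - p k" by (simp add: a_def b_def)
    moreover have "(norm a)\<^sup>2 < D + inverse (real (Suc j))" using pD[of j] by (simp add: a_def)
    moreover have "(norm b)\<^sup>2 < D + inverse (real (Suc k))" using pD[of k] by (simp add: b_def)
    ultimately have "(norm (b - a))\<^sup>2 \<le> 2 * inverse (real (Suc j)) + 2 * inverse (real (Suc k))"
      using id by linarith
    then show ?thesis using \<open>b - a = p j - p k\<close> by simp
  qed
  have "Cauchy p"
  proof (rule metric_CauchyI)
    fix e :: real assume e: "e > 0"
    obtain K :: nat where K: "4 / (e*e) < real K" using reals_Archimedean2 by blast
    have Kp: "real K > 0" using K e by (smt (verit) divide_pos_pos mult_pos_pos)
    have "\<forall>m\<ge>K. \<forall>n\<ge>K. dist (p m) (p n) < e"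
    proof (intro allI impI)
      fix m n assume mn: "m \<ge> K" "n \<ge> K"
      have i1: "inverse (real (Suc m)) \<le> inverse (real K)" using mn Kp
        by (intro le_imp_inverse_le) auto
      have i2: "inverse (real (Suc n)) \<le> inverse (real K)" using mn Kp
        by (intro le_imp_inverse_le) auto
      have "4 * inverse (real K) < e * e" using K e Kp
        by (simp add: field_simps)
      then have "(dist (p m) (p n))\<^sup>2 < e\<^sup>2"
        using para[of m n] i1 i2 by (simp add: dist_norm power2_eq_square)
      then show "dist (p m) (p n) < e" using e
        by (meson power_less_imp_less_base less_imp_le)
    qed
    then show "\<exists>M. \<forall>m\<ge>M. \<forall>n\<ge>M. dist (p m) (p n) < e" by blast
  qed
  then obtain p0 where plim: "p \<longlonglongrightarrow> p0"
    using Cauchy_convergent convergent_def by blast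
  have p0N: "p0 \<in> N"
    using clN plim pN closed_sequentially by blast
  define z where "z = h0 - p0"
  have "(\<lambda>j. (norm (h0 - p j))\<^sup>2) \<longlonglongrightarrow> (norm (h0 - p0))\<^sup>2"
    by (intro tendsto_intros plim)
  then have zD: "(norm z)\<^sup>2 \<le> D" unfolding z_def
    by (rule LIMSEQ_le[OF _ LIMSEQ_inverse_real_of_nat_add]) (use pD less_imp_le in blast)
  have zmin: "(norm z)\<^sup>2 \<le> (norm (z - n))\<^sup>2" if "n \<in> N" for n
  proof -
    have "p0 + n \<in> N" using p0N that Nadd by blast
    then have "D \<le> (norm (h0 - (p0 + n)))\<^sup>2" by (rule Dle)
    moreover have e: "h0 - (p0 + n) = z - n" by (simp add: z_def algebra_simps)
    ultimately have "D \<le> (norm (z - n))\<^sup>2" by simp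
    then show ?thesis using zD by linarith
  qed
  have orth: "inner z n = 0" if "n \<in> N" for n
  proof (cases "n = 0")
    case True then show ?thesis by simp
  next
    case False
    define c where "c = inner z n"
    define t where "t = c / inner n n"
    have nn: "inner n n > 0" using False by simp
    have "(norm z)\<^sup>2 \<le> (norm (z - t *\<^sub>R n))\<^sup>2" using zmin Nsc that by blast
    also have "\<dots> = (norm z)\<^sup>2 - 2 * t * c + t * t * inner n n"
      by (simp add: c_def power2_norm_eq_inner inner_diff_left inner_diff_right inner_commute algebra_simps)
    also have "\<dots> = (norm z)\<^sup>2 - c * c / inner n n"
      using nn by (simp add: t_def field_simps power2_eq_square)
    finally have "c * c / inner n n \<le> 0" by simp
    then have "c * c \<le> 0" using nn by (simp add: divide_le_0_iff)
    then have "c = 0" by (auto simp: mult_le_0_iff)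
    then show ?thesis by (simp add: c_def)
  qed
  have phz: "\<phi> z = 1" using p0N h0 by (simp add: z_def mi N_def)
  have zz: "inner z z > 0" using phz z0 by (cases "z = 0") auto
  define k where "k = (1 / inner z z) *\<^sub>R z"
  have "\<phi> h = inner h k" for h
  proof -
    have "h - \<phi> h *\<^sub>R z \<in> N" using phz by (simp add: N_def mi sc)
    then have "inner z (h - \<phi> h *\<^sub>R z) = 0" by (rule orth)
    then have "inner z h = \<phi> h * inner z z" by (simp add: inner_diff_right)
    then show ?thesis using zz by (simp add: k_def inner_commute)
  qed
  then show ?thesis by blast
qed

theorem theorem2:
  fixes \<iota> :: "'h::{real_inner,complete_space} \<Rightarrow> ('x \<Rightarrow> real)"
  assumes "uncountable (UNIV :: 'x set)"
  shows "\<not> (is_rkhs \<iota> \<and> ell_infty \<subseteq> range \<iota>)"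
proof
  assume A: "is_rkhs \<iota> \<and> ell_infty \<subseteq> range \<iota>"
  then have R: "is_rkhs \<iota>" and sub: "ell_infty \<subseteq> range \<iota>" by auto
  have "\<forall>x. \<exists>k. \<forall>h. \<iota> h x = inner h k"
  proof
    fix x
    show "\<exists>k. \<forall>h. \<iota> h x = inner h k"
      by (rule riesz_rep[of "\<lambda>h. \<iota> h x"]) (use R in \<open>auto simp: is_rkhs_def\<close>)
  qed
  then obtain kv where kv: "\<And>x h. \<iota> h x = inner h (kv x)" by metis
  have "\<exists>m::nat. infinite {x. norm (kv x) \<le> real m}"
  proof (rule ccontr)
    assume "\<not> ?thesis"
    then have fin: "\<And>m. finite {x. norm (kv x) \<le> real m}" by blast
    have "UNIV = (\<Union>m::nat. {x. norm (kv x) \<le> real m})"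
      using real_arch_simple by blast
    moreover have "countable (\<Union>m::nat. {x. norm (kv x) \<le> real m})"
      using fin by (intro countable_UN) (auto intro: countable_finite)
    ultimately show False using assms by simp
  qed
  then obtain m :: nat where inf: "infinite {x. norm (kv x) \<le> real m}" by blast
  then obtain y :: "nat \<Rightarrow> 'x" where yinj: "inj y" and yS: "range y \<subseteq> {x. norm (kv x) \<le> real m}"
    using infinite_countable_subset by blast
  define z where "z = (\<lambda>p. y (prod_encode p))"
  have "inj (y \<circ> prod_encode)" using inj_compose[OF yinj inj_prod_encode[of UNIV]] .
  then have zinj: "inj z" unfolding z_def by (simp add: comp_def)
  have kvb: "(norm (kv (z p)))\<^sup>2 \<le> (real m)\<^sup>2" for p
    using yS by (intro power_mono) (auto simp: z_def)
  have "\<forall>k. \<exists>e. (\<forall>i. e i = 1 \<or> e i = -1) \<and>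
        (norm (\<Sum>i<k. e i *\<^sub>R kv (z (k, i))))\<^sup>2 \<le> (\<Sum>i<k. (norm (kv (z (k, i))))\<^sup>2)"
  proof
    fix k
    show "\<exists>e. (\<forall>i. e i = 1 \<or> e i = -1) \<and>
        (norm (\<Sum>i<k. e i *\<^sub>R kv (z (k, i))))\<^sup>2 \<le> (\<Sum>i<k. (norm (kv (z (k, i))))\<^sup>2)"
      using greedy_signs[where n=k and v="\<lambda>i. kv (z (k, i))"] by simp
  qed
  then have "\<exists>eps. \<forall>k. (\<forall>i. eps k i = 1 \<or> eps k i = -1) \<and>
        (norm (\<Sum>i<k. eps k i *\<^sub>R kv (z (k, i))))\<^sup>2 \<le> (\<Sum>i<k. (norm (kv (z (k, i))))\<^sup>2)"
    by (rule choice)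
  then obtain eps where E: "\<forall>k. (\<forall>i. eps k i = 1 \<or> eps k i = -1) \<and>
        (norm (\<Sum>i<k. eps k i *\<^sub>R kv (z (k, i))))\<^sup>2 \<le> (\<Sum>i<k. (norm (kv (z (k, i))))\<^sup>2)"
    by blast
  have eps1: "\<And>k i. eps k i = 1 \<or> eps k i = -1" using E by blast
  have eps2: "\<And>k. (norm (\<Sum>i<k. eps k i *\<^sub>R kv (z (k, i))))\<^sup>2 \<le> (\<Sum>i<k. (norm (kv (z (k, i))))\<^sup>2)"
    using E by blast
  define f where "f = (\<lambda>x. if x \<in> range z then eps (fst (inv z x)) (snd (inv z x)) else 0)"
  have fz: "f (z (k, i)) = eps k i" for k i
    using zinj by (simp add: f_def)
  have "range f \<subseteq> {-1, 0, 1}" using eps1 by (auto simp: f_def)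
  then have "bounded (range f)"
    by (meson bounded_subset finite.emptyI finite.insertI finite_imp_bounded)
  then have "f \<in> range \<iota>" using sub by (auto simp: ell_infty_def)
  then obtain g where fg: "f = \<iota> g" by blast
  define C where "C = (norm g)\<^sup>2 * (real m)\<^sup>2"
  have key: "real k * real k \<le> C * real k" for k
  proof -
    define w where "w = (\<Sum>i<k. eps k i *\<^sub>R kv (z (k, i)))"
    have ee: "eps k i * eps k i = 1" for i using eps1[of k i] by auto
    have "(\<Sum>i<k. eps k i * f (z (k, i))) = real k"
      by (simp add: fz ee)
    moreover have "(\<Sum>i<k. eps k i * f (z (k, i))) = inner g w"
      by (simp add: w_def fg kv inner_sum_right)
    ultimately have "real k = inner g w" by simp
    then have k1: "real k \<le> norm g * norm w"
      using Cauchy_Schwarz_ineq2[of g w] by simp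
    have "real k * real k \<le> (norm g * norm w) * (norm g * norm w)"
      by (rule mult_mono[OF k1 k1]) auto
    also have "\<dots> = (norm g)\<^sup>2 * (norm w)\<^sup>2" by (simp add: power2_eq_square)
    finally have k2: "real k * real k \<le> (norm g)\<^sup>2 * (norm w)\<^sup>2" .
    have "(norm w)\<^sup>2 \<le> (\<Sum>i<k. (norm (kv (z (k, i))))\<^sup>2)" using eps2 by (simp add: w_def)
    also have "\<dots> \<le> (\<Sum>i<k. (real m)\<^sup>2)" by (rule sum_mono) (rule kvb)
    also have "\<dots> = real k * (real m)\<^sup>2" by simp
    finally have "(norm g)\<^sup>2 * (norm w)\<^sup>2 \<le> (norm g)\<^sup>2 * (real k * (real m)\<^sup>2)"
      by (rule mult_left_mono) simp
    with k2 show ?thesis by (simp add: C_def algebra_simps)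
  qed
  define k where "k = Suc (nat \<lceil>C\<rceil>)"
  have "real k > C" unfolding k_def by linarith
  moreover have "real k > 0" unfolding k_def by simp
  ultimately have "C * real k < real k * real k" by simp
  with key[of k] show False by linarith
qed

end
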